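(* Consider the principal–agent model described in the context. Let $(a^{\mathcal J},u^{\mathcal J})$ be a maximizer of $\max_{(a,u)\in\mathcal{J}}\{\mathbb{E}[X(a)\mid a]-c(a)-u\}$. Suppose the quota-bonus contract $s_q(x)=b\,\mathbf{1}_{\{x\ge q\}}$ (with $q,b\in[0,\infty)$) implements $(a^{\mathcal J},u^{\mathcal J})$. Then $b=\dfrac{c(a^{\mathcal J})+u^{\mathcal J}}{1-F(q\mid a^{\mathcal J})}$, and either $q=L(a^{\mathcal J})$, or $q>L(a^{\mathcal J})$ and \[ \frac{-F_a(q\mid a^{\mathcal J})}{1-F(q\mid a^{\mathcal J})}=\frac{c'(a^{\mathcal J})}{c(a^{\mathcal J})+u^{\mathcal J}}. \]
   Context: Model. An agent chooses effort $a\ge 0$. The outcome $X(a)$ is a continuous random variable with support $[L(a),\bar x]$, where $\bar x>0$ is fixed (possibly $+\infty$) and $L:[0,\infty)\to[0,\bar x)$ is nondecreasing on $[0,\infty)$ and continuously differentiable on $(0,\infty)$. Effort costs $c(a)$, where $c:[0,\infty)\to[0,\infty)$ is twice differentiable with $c'(a)>0$, $c''(a)\ge 0$. $X(a)$ has density $f(x\mid a)$ and cdf $F(x\mid a)$; for each fixed $x\in(L(a),\bar x]$, $f(x\mid a)$ and $F(x\mid a)$ are differentiable in $a>0$ with derivatives $f_a,F_a$, both continuous on $(L(a),\bar x]\times(0,\infty)$, and $F_a<0$ there. A contract is $s:\mathbb{R}_{\ge0}\to\mathbb{R}_{\ge0}$ (LL: $s\ge0$). $E^P(a,s)=\int_{L(a)}^{\bar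 x}[x-s(x)]f(x\mid a)\,dx$, $E^A(a,s)=\int_{L(a)}^{\bar x}s(x)f(x\mid a)\,dx-c(a)$, reservation utility $u_0\ge0$. Constraints: (IC) the chosen effort $a_s\in\arg\max_{a\ge0}E^A(a,s)$; (IR) $E^A(a_s,s)\ge u_0$; (LL). Indifferent agents choose the effort most favorable to the principal. Standing assumption: (i) $\mathbb{E}[X(a)\mid a]<\infty$ for all $a\ge0$ and is continuous in $a$ on $[0,\infty)$; (ii) $\lim_{a\to\infty}\{\mathbb{E}[X(a)\mid a]-c(a)\}=-\infty$; (iii) $a\mapsto\sup_{x\in(L(a),\bar x]}f_a(x\mid a)/f(x\mid a)$ is continuous on $(0,\infty)$; (iv) for any contract $s$ with $\mathbb{E}[s(X(a))\mid a]<\infty$, the limit $h\uparrow0$ of $\int_{L(a)}^{\bar x}\frac{f(x\mid a+h)-f(x\mid a)}{h}s(x)\,dx$ may be taken inside the integral. A contract $s$ implements $(a,u)$ if $(a,s)$ satisfies IC, IR, LL and $u=E^A(a,s)$. $\mathcal{J}=\{(a,u)\mid a>0,\ u\ge u_0,\ \sup_{x\in(L(a),\bar x]} f_a(x\mid a)/f(x\mid a)\ge c'(a)/(c(a)+u)\}\cup\{(0,u)\mid u\ge u_0\}$. *)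

theory Defs
  imports "HOL-Analysis.Analysis" "HOL-Analysis.Interval_Integral"
begin

text \<open>Outcome density f x a (outcome x, effort a), cdf F x a,
  lower support end L a, upper support end xbar (an extended real, possibly \<infinity>),
  cost c with derivative dc and second derivative ddc, partial derivatives in effort
  fa = f_a and Fa = F_a.\<close>

definition supp_int :: "(real \<Rightarrow> real) \<Rightarrow> ereal \<Rightarrow> real \<Rightarrow> real set" where
  "supp_int L xbar a = {x. L a < x \<and> ereal x \<le> xbar}"

definition EXP :: "(real \<Rightarrow> real) \<Rightarrow> ereal \<Rightarrow> (real \<Rightarrow> real \<Rightarrow> real) \<Rightarrow> real \<Rightarrow> real" where
  "EXP L xbar f a = (interval_lebesgue_integral lborel (ereal (L a)) xbar (\<lambda>x. x * f x a))"

definition EA :: "(real \<Rightarrow> real) \<Rightarrow> ereal \<Rightarrow> (real \<Rightarrow> real \<Rightarrow> real) \<Rightarrow> (real \<Rightarrow> real)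
    \<Rightarrow> real \<Rightarrow> (real \<Rightarrow> real) \<Rightarrow> real" where
  "EA L xbar f c a s = (interval_lebesgue_integral lborel (ereal (L a)) xbar (\<lambda>x. s x * f x a)) - c a"

definition EP :: "(real \<Rightarrow> real) \<Rightarrow> ereal \<Rightarrow> (real \<Rightarrow> real \<Rightarrow> real)
    \<Rightarrow> real \<Rightarrow> (real \<Rightarrow> real) \<Rightarrow> real" where
  "EP L xbar f a s = (interval_lebesgue_integral lborel (ereal (L a)) xbar (\<lambda>x. (x - s x) * f x a))"

text \<open>Contract s implements (a,u): IC (with tie-breaking in favour of the principal), IR, LL.\<close>
definition implements :: "(real \<Rightarrow> real) \<Rightarrow> ereal \<Rightarrow> (real \<Rightarrow> real \<Rightarrow> real) \<Rightarrow> (real \<Rightarrow> real)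
    \<Rightarrow> real \<Rightarrow> (real \<Rightarrow> real) \<Rightarrow> real \<Rightarrow> real \<Rightarrow> bool" where
  "implements L xbar f c u0 s a u \<longleftrightarrow>
     (\<forall>x\<ge>0. 0 \<le> s x) \<and> 0 \<le> a \<and>
     (\<forall>a'\<ge>0. EA L xbar f c a' s \<le> EA L xbar f c a s) \<and>
     (\<forall>a'\<ge>0. EA L xbar f c a' s = EA L xbar f c a s \<longrightarrow> EP L xbar f a' s \<le> EP L xbar f a s) \<and>
     u0 \<le> EA L xbar f c a s \<and> u = EA L xbar f c a s"

definition JSet :: "(real \<Rightarrow> real) \<Rightarrow> ereal \<Rightarrow> (real \<Rightarrow> real \<Rightarrow> real) \<Rightarrow> (real \<Rightarrow> real \<Rightarrow> real)
    \<Rightarrow> (real \<Rightarrow> real) \<Rightarrow> (real \<Rightarrow> real) \<Rightarrow> real \<Rightarrow> (real \<times> real) set" where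
  "JSet L xbar f fa c dc u0 =
     {(a, u). a > 0 \<and> u \<ge> u0 \<and>
        (SUP x\<in>supp_int L xbar a. ereal (fa x a / f x a)) \<ge> ereal (dc a / (c a + u))}
     \<union> {(0, u) | u. u \<ge> u0}"

definition pa_model :: "(real \<Rightarrow> real) \<Rightarrow> ereal \<Rightarrow> (real \<Rightarrow> real \<Rightarrow> real) \<Rightarrow> (real \<Rightarrow> real \<Rightarrow> real)
    \<Rightarrow> (real \<Rightarrow> real \<Rightarrow> real) \<Rightarrow> (real \<Rightarrow> real \<Rightarrow> real)
    \<Rightarrow> (real \<Rightarrow> real) \<Rightarrow> (real \<Rightarrow> real) \<Rightarrow> (real \<Rightarrow> real) \<Rightarrow> real \<Rightarrow> bool" where
  "pa_model L xbar f F fa Fa c dc ddc u0 \<longleftrightarrow>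
     \<comment> \<open>upper end of support\<close>
     xbar > 0 \<and>
     \<comment> \<open>lower end of support L\<close>
     (\<forall>a\<ge>0. 0 \<le> L a \<and> ereal (L a) < xbar) \<and> mono_on {0..} L \<and>
     (\<exists>L'. (\<forall>a>0. (L has_real_derivative L' a) (at a)) \<and> continuous_on {0<..} L') \<and>
     \<comment> \<open>cost\<close>
     (\<forall>a\<ge>0. 0 \<le> c a \<and> (c has_real_derivative dc a) (at a within {0..}) \<and>
        (dc has_real_derivative ddc a) (at a within {0..}) \<and> dc a > 0 \<and> ddc a \<ge> 0) \<and>
     \<comment> \<open>X(a) is continuous with density f(.|a), support [L a, xbar], cdf F(.|a)\<close>
     (\<forall>a\<ge>0. (\<forall>x. 0 \<le> f x a) \<and> (\<forall>x. x \<notin> supp_int L xbar a \<and> x \<noteq> L a \<longrightarrow> f x a = 0) \<and>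
        (\<forall>x\<in>supp_int L xbar a. 0 < f x a) \<and>
        integrable lborel (\<lambda>x. f x a) \<and> (LINT x|lborel. f x a) = 1 \<and>
        (\<forall>q. F q a = (LINT x:{..q}|lborel. f x a))) \<and>
     \<comment> \<open>differentiability in effort\<close>
     (\<forall>a>0. \<forall>x\<in>supp_int L xbar a.
        ((\<lambda>b. f x b) has_real_derivative fa x a) (at a) \<and>
        ((\<lambda>b. F x b) has_real_derivative Fa x a) (at a) \<and> Fa x a < 0) \<and>
     continuous_on {(x, a). a > 0 \<and> x \<in> supp_int L xbar a} (\<lambda>(x, a). fa x a) \<and>
     continuous_on {(x, a). a > 0 \<and> x \<in> supp_int L xbar a} (\<lambda>(x, a). Fa x a) \<and>
     \<comment> \<open>(i)\<close>
     (\<forall>a\<ge>0. interval_lebesgue_integrable lborel (ereal (L a)) xbar (\<lambda>x. x * f x a)) \<and>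
     continuous_on {0..} (EXP L xbar f) \<and>
     \<comment> \<open>(ii)\<close>
     filterlim (\<lambda>a. EXP L xbar f a - c a) at_bot at_top \<and>
     \<comment> \<open>(iii)\<close>
     continuous_on {0<..} (\<lambda>a. SUP x\<in>supp_int L xbar a. ereal (fa x a / f x a)) \<and>
     \<comment> \<open>(iv)\<close>
     (\<forall>s a. a > 0 \<longrightarrow> (\<forall>x\<ge>0. 0 \<le> s x) \<longrightarrow>
        interval_lebesgue_integrable lborel (ereal (L a)) xbar (\<lambda>x. s x * f x a) \<longrightarrow>
        interval_lebesgue_integrable lborel (ereal (L a)) xbar (\<lambda>x. fa x a * s x) \<and>
        ((\<lambda>h. interval_lebesgue_integral lborel (ereal (L a)) xbar (\<lambda>x. (f x (a + h) - f x a) / h * s x))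
           \<longlongrightarrow> (interval_lebesgue_integral lborel (ereal (L a)) xbar (\<lambda>x. fa x a * s x))) (at_left 0)) \<and>
     \<comment> \<open>reservation utility\<close>
     u0 \<ge> 0"

end

theory Submission
  imports Defs
begin

lemma EA_formula:
  fixes f :: "real \<Rightarrow> real \<Rightarrow> real"
  assumes f0: "\<forall>x. 0 \<le> f x a"
    and fz: "\<forall>x. x \<notin> supp_int L xbar a \<and> x \<noteq> L a \<longrightarrow> f x a = 0"
    and int: "integrable lborel (\<lambda>x. f x a)"
    and one: "(LINT x|lborel. f x a) = 1"
    and Fdef: "F q a = (LINT x:{..q}|lborel. f x a)"
    and lt: "ereal (L a) < xbar"
  shows "EA L xbar f c a (\<lambda>x. if q \<le> x then b else 0) = b * (1 - F q a) - c a"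
proof -
  have ae: "AE x in lborel. indicator (einterval (L a) xbar) x *\<^sub>R ((if q \<le> x then b else 0) * f x a)
      = b * f x a - b * (indicator {..q} x *\<^sub>R f x a)"
    using AE_lborel_singleton[of "L a"] AE_lborel_singleton[of "real_of_ereal xbar"] AE_lborel_singleton[of q]
  proof eventually_elim
    case (elim x)
    show ?case
    proof (cases "x \<in> einterval (L a) xbar")
      case True
      then show ?thesis using elim by (auto simp: indicator_def einterval_def)
    next
      case False
      have "x \<notin> supp_int L xbar a"
      proof
        assume "x \<in> supp_int L xbar a"
        then have "L a < x" "ereal x \<le> xbar" by (auto simp: supp_int_def)
        with False have "ereal x = xbar" by (auto simp: einterval_def)
        then have "x = real_of_ereal xbar" by auto
        with elim show False by simp
      qed
      then have "f x a = 0" using fz elim by auto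
      then show ?thesis by simp
    qed
  qed
  have i2: "integrable lborel (\<lambda>x. indicator {..q} x *\<^sub>R f x a)"
    by (rule integrable_mult_indicator) (auto simp: int)
  have "EA L xbar f c a (\<lambda>x. if q \<le> x then b else 0) =
      (LINT x|lborel. indicator (einterval (L a) xbar) x *\<^sub>R ((if q \<le> x then b else 0) * f x a)) - c a"
    using lt by (simp add: EA_def interval_lebesgue_integral_def set_lebesgue_integral_def)
  also have "(LINT x|lborel. indicator (einterval (L a) xbar) x *\<^sub>R ((if q \<le> x then b else 0) * f x a))
     = (LINT x|lborel. b * f x a - b * (indicator {..q} x *\<^sub>R f x a))"
  proof (rule integral_cong_AE)
    have [measurable]: "(\<lambda>x. f x a) \<in> borel_measurable lborel" using int by auto
    show "(\<lambda>x. indicator (einterval (L a) xbar) x *\<^sub>R ((if q \<le> x then b else 0) * f x a)) \<in> borel_measurable lborel"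
      by measurable
    show "(\<lambda>x. b * f x a - b * (indicator {..q} x *\<^sub>R f x a)) \<in> borel_measurable lborel"
      by measurable
  qed (use ae in auto)
  also have "\<dots> = b * 1 - b * F q a"
    using int i2 one Fdef by (simp add: set_lebesgue_integral_def)
  finally show ?thesis by (simp add: algebra_simps)
qed

lemma F_le1:
  fixes f :: "real \<Rightarrow> real \<Rightarrow> real"
  assumes f0: "\<forall>x. 0 \<le> f x a"
    and int: "integrable lborel (\<lambda>x. f x a)"
    and one: "(LINT x|lborel. f x a) = 1"
    and Fdef: "F q a = (LINT x:{..q}|lborel. f x a)"
  shows "F q a \<le> 1"
proof -
  have i2: "integrable lborel (\<lambda>x. indicator {..q} x *\<^sub>R f x a)"
    by (rule integrable_mult_indicator) (auto simp: int)
  have "(LINT x|lborel. indicator {..q} x *\<^sub>R f x a) \<le> (LINT x|lborel. f x a)"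
    by (rule integral_mono[OF i2 int]) (use f0 in \<open>auto simp: indicator_def\<close>)
  then show ?thesis using one Fdef by (simp add: set_lebesgue_integral_def)
qed

lemma F_0:
  fixes f :: "real \<Rightarrow> real \<Rightarrow> real"
  assumes fz: "\<forall>x. x \<notin> supp_int L xbar a \<and> x \<noteq> L a \<longrightarrow> f x a = 0"
    and Fdef: "F q a = (LINT x:{..q}|lborel. f x a)"
    and lt: "q < L a"
  shows "F q a = 0"
proof -
  have "(\<lambda>x. indicator {..q} x *\<^sub>R f x a) = (\<lambda>x. 0)"
  proof
    fix x show "indicator {..q} x *\<^sub>R f x a = 0"
    proof (cases "x \<le> q")
      case True
      then have "x \<notin> supp_int L xbar a" "x \<noteq> L a" using lt by (auto simp: supp_int_def)
      then show ?thesis using fz by simp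
    qed simp
  qed
  then have eq: "(LINT x|lborel. indicator {..q} x *\<^sub>R f x a) = 0" by (metis integral_zero)
  show ?thesis using Fdef eq unfolding set_lebesgue_integral_def by linarith
qed

lemma F_1:
  fixes f :: "real \<Rightarrow> real \<Rightarrow> real"
  assumes fz: "\<forall>x. x \<notin> supp_int L xbar a \<and> x \<noteq> L a \<longrightarrow> f x a = 0"
    and one: "(LINT x|lborel. f x a) = 1"
    and Fdef: "F q a = (LINT x:{..q}|lborel. f x a)"
    and lt: "ereal (L a) < xbar" and gt: "xbar < ereal q"
  shows "F q a = 1"
proof -
  have "(\<lambda>x. indicator {..q} x *\<^sub>R f x a) = (\<lambda>x. f x a)"
  proof
    fix x show "indicator {..q} x *\<^sub>R f x a = f x a"
    proof (cases "x \<le> q")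
      case False
      then have "ereal q < ereal x" by simp
      then have xx: "xbar < ereal x" by (rule less_trans[OF gt])
      then have "ereal (L a) < ereal x" by (rule less_trans[OF lt])
      then have "x \<noteq> L a" by simp
      moreover have "x \<notin> supp_int L xbar a" using xx unfolding supp_int_def by (simp add: not_le)
      ultimately have "f x a = 0" using fz by blast
      then show ?thesis by simp
    next
      case True then show ?thesis by (simp add: indicator_def)
    qed
  qed
  then have eq: "(LINT x|lborel. indicator {..q} x *\<^sub>R f x a) = 1" using one by metis
  show ?thesis using Fdef eq unfolding set_lebesgue_integral_def by linarith
qed

lemma c_mono:
  fixes c dc :: "real \<Rightarrow> real"
  assumes d: "\<forall>a\<ge>0. (c has_real_derivative dc a) (at a within {0..}) \<and> dc a > 0"
    and xy: "0 \<le> x" "x < y"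
  shows "c x < c y"
proof (rule DERIV_pos_imp_increasing_open[OF xy(2)])
  fix z assume "x < z" "z < y"
  then have z0: "z > 0" using xy by simp
  then have "z \<in> interior {0::real..}" by simp
  then have at: "at z within {0::real..} = at z" by (rule at_within_interior)
  have "(c has_real_derivative dc z) (at z within {0..})" "dc z > 0" using d z0 by auto
  then show "\<exists>l. DERIV c z :> l \<and> 0 < l" unfolding at by blast
next
  have "\<forall>a\<in>{0..}. continuous (at a within {0..}) c"
  proof
    fix a :: real assume "a \<in> {0..}"
    then have "(c has_real_derivative dc a) (at a within {0..})" using d by auto
    then show "continuous (at a within {0..}) c" by (rule DERIV_continuous)
  qed
  then have "continuous_on {0..} c" by (simp add: continuous_on_eq_continuous_within)
  then show "continuous_on {x..y} c" by (rule continuous_on_subset) (use xy in auto)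
qed

theorem lemma1:
  fixes L c dc ddc :: "real \<Rightarrow> real" and f F fa Fa :: "real \<Rightarrow> real \<Rightarrow> real"
    and xbar :: ereal and u0 aJ uJ q b :: real
  assumes model: "pa_model L xbar f F fa Fa c dc ddc u0"
    and inJ: "(aJ, uJ) \<in> JSet L xbar f fa c dc u0"
    and maxJ: "\<forall>(a, u) \<in> JSet L xbar f fa c dc u0.
                 EXP L xbar f a - c a - u \<le> EXP L xbar f aJ - c aJ - uJ"
    and aJ_pos: "aJ > 0"
    and q: "q \<ge> 0" and b: "b \<ge> 0"
    and impl: "implements L xbar f c u0 (\<lambda>x. if q \<le> x then b else 0) aJ uJ"
  shows "b = (c aJ + uJ) / (1 - F q aJ) \<and>
         (q = L aJ \<or>
          (q > L aJ \<and> - Fa q aJ / (1 - F q aJ) = dc aJ / (c aJ + uJ)))"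
proof -
  define s where "s = (\<lambda>x::real. if q \<le> x then b else 0)"
  have Lc: "\<forall>a\<ge>0. 0 \<le> L a \<and> ereal (L a) < xbar" using model by (simp add: pa_model_def)
  obtain L' where L': "\<forall>a>0. (L has_real_derivative L' a) (at a)" using model by (auto simp: pa_model_def)
  have cd: "\<forall>a\<ge>0. (c has_real_derivative dc a) (at a within {0..}) \<and> dc a > 0"
    using model by (simp add: pa_model_def)
  have dens: "\<forall>a\<ge>0. (\<forall>x. 0 \<le> f x a) \<and> (\<forall>x. x \<notin> supp_int L xbar a \<and> x \<noteq> L a \<longrightarrow> f x a = 0) \<and>
        integrable lborel (\<lambda>x. f x a) \<and> (LINT x|lborel. f x a) = 1 \<and>
        (\<forall>q. F q a = (LINT x:{..q}|lborel. f x a))"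
    using model by (simp add: pa_model_def)
  have dF: "\<forall>a>0. \<forall>x\<in>supp_int L xbar a. ((\<lambda>b. F x b) has_real_derivative Fa x a) (at a)"
    using model by (simp add: pa_model_def)
  have IC: "\<forall>a'\<ge>0. EA L xbar f c a' s \<le> EA L xbar f c aJ s" and uJ: "uJ = EA L xbar f c aJ s"
    using impl by (simp_all add: implements_def s_def)
  have EAf: "EA L xbar f c a s = b * (1 - F q a) - c a" if "a \<ge> 0" for a
    unfolding s_def by (rule EA_formula) (use dens Lc that in auto)
  have Fle: "F q a \<le> 1" if "a \<ge> 0" for a
    by (rule F_le1[of f a]) (use dens that in auto)
  have cm: "c x < c y" if "0 \<le> x" "x < y" for x y
    by (rule c_mono[OF cd that])
  have aJ0: "aJ \<ge> 0" using aJ_pos by simp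
  have F1: "F q aJ < 1"
  proof (rule ccontr)
    assume "\<not> F q aJ < 1"
    then have "F q aJ = 1" using Fle[OF aJ0] by simp
    then have "EA L xbar f c aJ s = - c aJ" using EAf[OF aJ0] by simp
    moreover have "EA L xbar f c 0 s \<ge> - c 0" using EAf[of 0] Fle[of 0] b by simp
    moreover have "c 0 < c aJ" using cm aJ_pos by simp
    ultimately show False using IC by force
  qed
  have ueq: "c aJ + uJ = b * (1 - F q aJ)" using uJ EAf[OF aJ0] by simp
  have beq: "b = (c aJ + uJ) / (1 - F q aJ)" using ueq F1 by (simp add: field_simps)
  have qL: "q \<ge> L aJ"
  proof (rule ccontr)
    assume "\<not> q \<ge> L aJ"
    then have qlt: "q < L aJ" by simp
    have "isCont L aJ" using L' aJ_pos DERIV_isCont by blast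
    then obtain d where d: "d > 0" "\<forall>y. y \<noteq> aJ \<and> norm (y - aJ) < d \<longrightarrow> norm (L y - L aJ) < L aJ - q"
      using qlt unfolding isCont_def LIM_eq by (metis diff_gt_0_iff_gt)
    define a' where "a' = max (aJ/2) (aJ - d/2)"
    have a': "0 \<le> a'" "a' < aJ" "a' \<noteq> aJ" "norm (a' - aJ) < d" using aJ_pos d(1)
      by (auto simp: a'_def)
    then have "q < L a'" using d(2) by force
    then have "F q a' = 0" by (intro F_0[of L xbar a' f]) (use dens a' in auto)
    moreover have "F q aJ = 0" by (intro F_0[of L xbar aJ f]) (use dens aJ0 qlt in auto)
    moreover have "c a' < c aJ" using cm a' by simp
    ultimately have "EA L xbar f c a' s > EA L xbar f c aJ s" using EAf a' aJ0 by simp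
    then show False using IC a' by force
  qed
  show ?thesis
  proof (cases "q = L aJ")
    case True then show ?thesis by (rule conjI[OF beq disjI1])
  next
    case False
    then have qg: "q > L aJ" using qL by simp
    have qx: "ereal q \<le> xbar"
    proof (rule ccontr)
      assume "\<not> ereal q \<le> xbar"
      then have "xbar < ereal q" by simp
      moreover have "\<forall>x. x \<notin> supp_int L xbar aJ \<and> x \<noteq> L aJ \<longrightarrow> f x aJ = 0" "(LINT x|lborel. f x aJ) = 1"
        "F q aJ = (LINT x:{..q}|lborel. f x aJ)" "ereal (L aJ) < xbar"
        using dens Lc aJ0 by blast+
      ultimately have "F q aJ = 1" using F_1[of L xbar aJ f] by blast
      then show False using F1 by simp
    qed
    have qs: "q \<in> supp_int L xbar aJ" using qg qx by (simp add: supp_int_def)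
    have dFq: "((\<lambda>a. F q a) has_real_derivative Fa q aJ) (at aJ)" using dF aJ_pos qs by blast
    have "aJ \<in> interior {0::real..}" using aJ_pos by simp
    then have dc: "(c has_real_derivative dc aJ) (at aJ)" using cd aJ0 at_within_interior by metis
    have dg: "((\<lambda>a. b * (1 - F q a) - c a) has_real_derivative (b * (0 - Fa q aJ) - dc aJ)) (at aJ)"
      by (intro DERIV_diff DERIV_cmult DERIV_const dFq dc)
    have "b * (0 - Fa q aJ) - dc aJ = 0"
    proof (rule DERIV_local_max[OF dg aJ_pos], intro allI impI)
      fix y assume "\<bar>aJ - y\<bar> < aJ"
      then have "y \<ge> 0" by simp
      then show "b * (1 - F q y) - c y \<le> b * (1 - F q aJ) - c aJ"
        using IC[rule_format, OF \<open>y \<ge> 0\<close>] EAf[OF \<open>y \<ge> 0\<close>] EAf[OF aJ0] by simp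
    qed
    then have key: "- b * Fa q aJ = dc aJ" by simp
    have "dc aJ > 0" using cd aJ0 by simp
    then have "b \<noteq> 0" using key by auto
    have "dc aJ / (c aJ + uJ) = (b * (- Fa q aJ)) / (b * (1 - F q aJ))"
      using key ueq by simp
    also have "\<dots> = - Fa q aJ / (1 - F q aJ)"
      using \<open>b \<noteq> 0\<close> by (rule mult_divide_mult_cancel_left)
    finally have "- Fa q aJ / (1 - F q aJ) = dc aJ / (c aJ + uJ)" by simp
    then show ?thesis by (rule conjI[OF beq disjI2[OF conjI[OF qg]]])
  qed
qed

end
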